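(* Let $u\in\mathbb{N}$, $u\geq 2$, let $l_1,\dots,l_u$ be non-negative integers, and let $M:=\max\{l_j:j=1,\dots,u\}$. Then the minimal value $K$ for which there exists a well distributing matrix $\mathcal{K}\in\{0,1\}^{u\times K}$ is $$\max\Bigl\{M,\Bigl\lceil\tfrac{1}{u-1}\sum_{i=1}^u l_i\Bigr\rceil\Bigr\}.$$
   Context: Given $u,K\in\mathbb{N}$ and non-negative integers $l_1,\dots,l_u$, a matrix $\mathcal{K}\in\{0,1\}^{u\times K}$ is well distributing if (i) $\sum_{j=1}^K\mathcal{K}_{i,j}=l_i$ for all $i=1,\dots,u$, and (ii) $1\le\sum_{i=1}^u\mathcal{K}_{i,j}\le u-1$ for all $j=1,\dots,K$. *)

theory Defs
  imports Complex_Main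
begin

text \<open>A u x K matrix with entries in {0,1}, indexed by rows 1..u and columns 1..K.
  Entries outside this range are irrelevant.\<close>
definition well_distributing :: "nat \<Rightarrow> (nat \<Rightarrow> nat) \<Rightarrow> nat \<Rightarrow> (nat \<Rightarrow> nat \<Rightarrow> nat) \<Rightarrow> bool" where
  "well_distributing u l K A \<longleftrightarrow>
     (\<forall>i\<in>{1..u}. \<forall>j\<in>{1..K}. A i j \<in> {0, 1}) \<and>
     (\<forall>i\<in>{1..u}. (\<Sum>j=1..K. A i j) = l i) \<and>
     (\<forall>j\<in>{1..K}. 1 \<le> (\<Sum>i=1..u. A i j) \<and> (\<Sum>i=1..u. A i j) \<le> u - 1)"

end

theory Submission
  imports Defs
begin

lemma L1:
  assumes "n \<le> K" "(0::nat) < K"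
  shows "card {t \<in> {a..<a+n}. t mod K = r} \<le> 1"
proof -
  have "\<forall>x\<in>{t \<in> {a..<a+n}. t mod K = r}. \<forall>y\<in>{t \<in> {a..<a+n}. t mod K = r}. x = y"
  proof (intro ballI)
    fix x y assume x: "x \<in> {t \<in> {a..<a+n}. t mod K = r}" and y: "y \<in> {t \<in> {a..<a+n}. t mod K = r}"
    show "x = y"
    proof (rule ccontr)
      assume "x \<noteq> y"
      then consider "x < y" | "y < x" by linarith
      then show False
      proof cases
        case 1
        have "K dvd y - x" using x y 1 mod_eq_dvd_iff_nat[of x y K] by auto
        moreover have "0 < y - x" "y - x < K" using 1 x y assms by auto
        ultimately show False by (meson dvd_imp_le not_le)
      next
        case 2
        have "K dvd x - y" using x y 2 mod_eq_dvd_iff_nat[of y x K] by auto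
        moreover have "0 < x - y" "x - y < K" using 2 x y assms by auto
        ultimately show False by (meson dvd_imp_le not_le)
      qed
    qed
  qed
  then show ?thesis by (simp add: card_le_Suc0_iff_eq)
qed

lemma L2:
  assumes "finite A" "(0::nat) < K"
  shows "(\<Sum>r<K. card {t\<in>A. t mod K = r}) = card A"
proof -
  have "A = (\<Union>r\<in>{..<K}. {t\<in>A. t mod K = r})" using assms by auto
  then have "card A = card (\<Union>r\<in>{..<K}. {t\<in>A. t mod K = r})" by simp
  also have "\<dots> = (\<Sum>r<K. card {t\<in>A. t mod K = r})"
    by (rule card_UN_disjoint) (use assms in auto)
  finally show ?thesis by simp
qed

lemma L3:
  fixes P :: "nat \<Rightarrow> nat"
  assumes "P 1 = 0" "\<And>i. P i \<le> P (Suc i)"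
  shows "(\<Sum>i=1..n. card {t\<in>{P i..<P (Suc i)}. Q t}) = card {t\<in>{..<P (Suc n)}. Q t}"
proof (induction n)
  case 0
  then show ?case using assms by simp
next
  case (Suc n)
  have "{t\<in>{..<P (Suc (Suc n))}. Q t} = {t\<in>{..<P (Suc n)}. Q t} \<union> {t\<in>{P (Suc n)..<P (Suc (Suc n))}. Q t}"
    using assms(2)[of "Suc n"] by auto
  moreover have "card ({t\<in>{..<P (Suc n)}. Q t} \<union> {t\<in>{P (Suc n)..<P (Suc (Suc n))}. Q t})
     = card {t\<in>{..<P (Suc n)}. Q t} + card {t\<in>{P (Suc n)..<P (Suc (Suc n))}. Q t}"
    by (rule card_Un_disjoint) auto
  ultimately show ?case using Suc by simp
qed

lemma L4:
  assumes "S \<le> K * m" "(0::nat) < K"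
  shows "card {t\<in>{..<S}. t mod K = r} \<le> m"
proof -
  have "inj_on (\<lambda>t. t div K) {t\<in>{..<S}. t mod K = r}"
  proof (intro inj_onI)
    fix x y assume "x \<in> {t\<in>{..<S}. t mod K = r}" "y \<in> {t\<in>{..<S}. t mod K = r}" "x div K = y div K"
    then have "x mod K = y mod K" "x div K = y div K" by auto
    then show "x = y" by (metis div_mult_mod_eq)
  qed
  moreover have "(\<lambda>t. t div K) ` {t\<in>{..<S}. t mod K = r} \<subseteq> {..<m}"
  proof
    fix x assume "x \<in> (\<lambda>t. t div K) ` {t\<in>{..<S}. t mod K = r}"
    then obtain t where "t < S" "x = t div K" by auto
    then have "t < K * m" using assms by simp
    then show "x \<in> {..<m}" using \<open>x = t div K\<close> assms
      by (simp add: div_less_iff_less_mult mult.commute)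
  qed
  ultimately show ?thesis by (metis card_inj_on_le card_lessThan finite_lessThan)
qed

lemma L5:
  assumes "r < K" "K \<le> S" "(0::nat) < K"
  shows "1 \<le> card {t\<in>{..<S}. t mod K = r}"
proof -
  have "r \<in> {t\<in>{..<S}. t mod K = r}" using assms by auto
  moreover have "finite {t\<in>{..<S}. t mod K = r}" by simp
  ultimately have "card {t\<in>{..<S}. t mod K = r} \<noteq> 0" by auto
  then show ?thesis by linarith
qed

theorem lemma9:
  fixes u :: nat and l :: "nat \<Rightarrow> nat"
  assumes "u \<ge> 2"
  defines "M \<equiv> Max (l ` {1..u})"
  defines "K0 \<equiv> max M (nat \<lceil>real (\<Sum>i=1..u. l i) / real (u - 1)\<rceil>)"
  shows "(\<exists>A. well_distributing u l K0 A) \<and>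
         (\<forall>K A. well_distributing u l K A \<longrightarrow> K0 \<le> K)"
proof
  define S where "S = (\<Sum>i=1..u. l i)"
  have lM: "l i \<le> M" if "i \<in> {1..u}" for i
    unfolding M_def using that by (intro Max_ge) auto
  have MS: "M \<le> S"
  proof -
    have "M \<in> l ` {1..u}" unfolding M_def using assms(1) by (intro Max_in) auto
    then obtain i where i: "i \<in> {1..u}" "M = l i" by auto
    then show ?thesis unfolding S_def using member_le_sum[of i "{1..u}" l] by auto
  qed
  have u1: "real (u - 1) \<ge> 1" using assms(1) by auto
  have cS: "nat \<lceil>real S / real (u - 1)\<rceil> \<le> S"
  proof -
    have "real S * 1 \<le> real S * real (u - 1)" by (rule mult_left_mono[OF u1]) simp
    then have "real S / real (u - 1) \<le> real S" using u1 by (simp add: divide_le_eq)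
    then show ?thesis by (simp add: ceiling_le_iff nat_le_iff)
  qed
  have K0S: "K0 \<le> S" unfolding K0_def S_def[symmetric] using MS cS by simp
  have K0u: "S \<le> K0 * (u - 1)"
  proof -
    have "real S / real (u - 1) \<le> real K0" unfolding K0_def S_def[symmetric]
      by (rule order_trans[OF real_nat_ceiling_ge]) simp
    then have "real S \<le> real K0 * real (u - 1)" using u1 by (simp add: divide_le_eq)
    then show ?thesis by (metis of_nat_le_iff of_nat_mult)
  qed
  have lK: "l i \<le> K0" if "i \<in> {1..u}" for i using lM[OF that] unfolding K0_def by simp
  show "\<exists>A. well_distributing u l K0 A"
  proof (cases "K0 = 0")
    case True
    then have "\<forall>i\<in>{1..u}. l i = 0" using lK by fastforce
    then show ?thesis unfolding well_distributing_def using True by (intro exI[of _ "\<lambda>_ _. 0"]) auto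
  next
    case False
    then have K0p: "0 < K0" by simp
    define P where "P i = (\<Sum>k=1..<i. l k)" for i
    have P1: "P 1 = 0" unfolding P_def by simp
    have PS: "P (Suc i) = P i + l i" if "1 \<le> i" for i unfolding P_def using that by simp
    have Pmono: "P i \<le> P (Suc i)" for i
      by (cases "i = 0") (auto simp: PS P_def)
    have PSu: "P (Suc u) = S" unfolding P_def S_def
      by (metis atLeastLessThanSuc_atLeastAtMost)
    define A where "A i j = card {t\<in>{P i..<P i + l i}. t mod K0 = j - 1}" for i j
    have ent: "A i j \<le> 1" if "i \<in> {1..u}" for i j
      unfolding A_def using L1[OF lK[OF that] K0p] .
    have row: "(\<Sum>j=1..K0. A i j) = l i" for i
    proof -
      have "(\<Sum>j=1..K0. A i j) = (\<Sum>r<K0. card {t\<in>{P i..<P i + l i}. t mod K0 = r})"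
        unfolding A_def
        by (rule sum.reindex_bij_witness[of _ Suc "\<lambda>j. j - 1"]) auto
      also have "\<dots> = l i" using L2[OF _ K0p, of "{P i..<P i + l i}"] by simp
      finally show ?thesis .
    qed
    have col: "(\<Sum>i=1..u. A i j) = card {t\<in>{..<S}. t mod K0 = j - 1}" for j
    proof -
      have "(\<Sum>i=1..u. A i j) = (\<Sum>i=1..u. card {t\<in>{P i..<P (Suc i)}. t mod K0 = j - 1})"
        unfolding A_def by (intro sum.cong) (auto simp: PS)
      also have "\<dots> = card {t\<in>{..<P (Suc u)}. t mod K0 = j - 1}" by (rule L3[OF P1 Pmono])
      finally show ?thesis using PSu by simp
    qed
    show ?thesis unfolding well_distributing_def
    proof (intro exI[of _ A] conjI ballI)
      fix i j assume "i \<in> {1..u}" "j \<in> {1..K0}"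
      then have "A i j \<le> 1" using ent by blast
      then show "A i j \<in> {0, 1}" by auto
    next
      fix i show "(\<Sum>j=1..K0. A i j) = l i" by (rule row)
    next
      fix j assume j: "j \<in> {1..K0}"
      show "1 \<le> (\<Sum>i=1..u. A i j)" unfolding col using j K0S K0p by (intro L5) auto
      show "(\<Sum>i=1..u. A i j) \<le> u - 1" unfolding col using K0u K0p by (intro L4) auto
    qed
  qed
next
  show "\<forall>K A. well_distributing u l K A \<longrightarrow> K0 \<le> K"
  proof (intro allI impI)
    fix K A assume w: "well_distributing u l K A"
    have M: "M \<le> K"
    proof -
      have "M \<in> l ` {1..u}" unfolding M_def using assms(1) by (intro Max_in) auto
      then obtain i where i: "i \<in> {1..u}" "M = l i" by auto
      have "(\<Sum>j=1..K. A i j) \<le> (\<Sum>j=1..K. 1)"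
        using w i(1) unfolding well_distributing_def by (intro sum_mono) fastforce
      then show ?thesis using w i unfolding well_distributing_def by simp
    qed
    have "(\<Sum>i=1..u. l i) = (\<Sum>i=1..u. \<Sum>j=1..K. A i j)"
      using w unfolding well_distributing_def by simp
    also have "\<dots> = (\<Sum>j=1..K. \<Sum>i=1..u. A i j)" by (rule sum.swap)
    also have "\<dots> \<le> (\<Sum>j=1..K. u - 1)"
      using w unfolding well_distributing_def by (intro sum_mono) auto
    finally have "(\<Sum>i=1..u. l i) \<le> K * (u - 1)" by simp
    then have "real (\<Sum>i=1..u. l i) \<le> real K * real (u - 1)"
      by (metis of_nat_le_iff of_nat_mult)
    then have "real (\<Sum>i=1..u. l i) / real (u - 1) \<le> real K" using assms(1)
      by (simp add: divide_le_eq)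
    then have "nat \<lceil>real (\<Sum>i=1..u. l i) / real (u - 1)\<rceil> \<le> K"
      by (simp add: ceiling_le_iff nat_le_iff)
    then show "K0 \<le> K" unfolding K0_def using M by simp
  qed
qed

end
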